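(* For $n\ge 2$, $$(\mathfrak C_0+\mathfrak C_0+\mathfrak C_0+\mathfrak C_0+\mathfrak C_0)^n=\binom{2n-1}{4}\mathfrak C_{2n}+\frac{4n^2-16n+17}{3}\binom{2n}{2}\binom{2n-3}{2}\mathfrak C_{2n-2}+\binom{2n}{4}(2n-5)^4\mathfrak C_{2n-4}.$$
   Context: The numbers $\mathfrak C_{2n}$ (Cauchy numbers with level $2$) are defined by $\frac{t}{{\rm arcsinh}\,t}=\sum_{n=0}^\infty\mathfrak C_{2n}\frac{t^{2n}}{(2n)!}$. Convolution notation: $(\mathfrak C_{2j_1}+\cdots+\mathfrak C_{2j_k})^n:=\sum_{i_1+\cdots+i_k=n,\ i_1,\dots,i_k\ge0}\frac{(2n)!}{(2i_1)!\cdots(2i_k)!}\mathfrak C_{2i_1+2j_1}\cdots\mathfrak C_{2i_k+2j_k}$ (here with $k=5$ summands, all $j_i=0$). *)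

theory Defs
  imports "HOL-Computational_Algebra.Formal_Power_Series"
begin

definition sinh_fps :: "real fps" where
  "sinh_fps = (fps_exp 1 - fps_exp (-1)) / fps_const 2"

definition arcsinh_fps :: "real fps" where
  "arcsinh_fps = fps_inv sinh_fps"

definition cauchy2_egf :: "real fps" where
  "cauchy2_egf = fps_X / arcsinh_fps"

text \<open>cauchy2 m is the Cauchy number with level 2, C_{2m}
  (t / arcsinh t = sum_m C_{2m} t^(2m) / (2m)!).\<close>
definition cauchy2 :: "nat \<Rightarrow> real" where
  "cauchy2 m = fact (2 * m) * fps_nth cauchy2_egf (2 * m)"

text \<open>Convolution (C_0 + ... + C_0)^n with k summands (all shifts j_i = 0).\<close>
definition cauchy2_conv :: "nat \<Rightarrow> nat \<Rightarrow> real" where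
  "cauchy2_conv k n =
     (\<Sum>i\<in>{i \<in> {..<k} \<rightarrow>\<^sub>E {..n}. sum i {..<k} = n}.
        fact (2 * n) / (\<Prod>r<k. fact (2 * i r)) * (\<Prod>r<k. cauchy2 (i r)))"

end

theory Submission
  imports Defs
begin
unbundle fps_syntax

definition cosh_fps :: "real fps" where
  "cosh_fps = (fps_exp 1 + fps_exp (-1)) / fps_const 2"

lemma half_div: "(x::real fps) / fps_const 2 = fps_const (1/2) * x"
  by (simp add: fps_divide_unit fps_const_inverse mult.commute)

lemma sinh_nth: "sinh_fps $ n = (1 - (-1)^n) / fact n / 2"
  by (simp add: sinh_fps_def half_div field_simps)

lemma sinh0: "sinh_fps $ 0 = 0" by (simp add: sinh_nth)
lemma sinh1: "sinh_fps $ 1 = 1" by (simp add: sinh_nth)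
lemma sinh1': "sinh_fps $ Suc 0 = 1" by (simp add: sinh_nth)

lemma deriv_sinh: "fps_deriv sinh_fps = cosh_fps"
  by (simp add: sinh_fps_def cosh_fps_def half_div fps_const_neg[symmetric] del: fps_const_neg)

lemma deriv_cosh: "fps_deriv cosh_fps = sinh_fps"
  by (simp add: sinh_fps_def cosh_fps_def half_div algebra_simps fps_const_neg[symmetric] del: fps_const_neg)

lemma cosh_sq: "cosh_fps^2 = 1 + sinh_fps^2"
proof -
  have "fps_exp (1::real) * fps_exp (-1) = 1"
    by (simp flip: fps_exp_add_mult)
  moreover have "4 * (fps_const (1/2) * fps_const (1/2) :: real fps) = 1"
    by (simp add: numeral_fps_const)
  ultimately show ?thesis
    by (simp add: sinh_fps_def cosh_fps_def half_div power2_eq_square algebra_simps)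
qed

lemma g0: "arcsinh_fps $ 0 = 0"
  by (simp add: arcsinh_fps_def fps_inv_def)
lemma g1: "arcsinh_fps $ 1 = 1"
  by (simp add: arcsinh_fps_def fps_inv_def sinh1')
lemma g_ne0: "arcsinh_fps \<noteq> 0"
  using g1 by auto

lemma sinh_g: "sinh_fps oo arcsinh_fps = fps_X"
  unfolding arcsinh_fps_def by (rule fps_inv_right[OF sinh0]) (simp add: sinh1')

lemma cq: "(cosh_fps oo arcsinh_fps) * fps_deriv arcsinh_fps = 1"
proof -
  have "fps_deriv (sinh_fps oo arcsinh_fps) = (cosh_fps oo arcsinh_fps) * fps_deriv arcsinh_fps"
    using fps_compose_deriv[OF g0, of sinh_fps] by (simp add: deriv_sinh)
  then show ?thesis by (simp add: sinh_g)
qed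

lemma c_sq: "(cosh_fps oo arcsinh_fps)^2 = 1 + fps_X^2"
proof -
  have "(cosh_fps oo arcsinh_fps)^2 = cosh_fps^2 oo arcsinh_fps"
    by (simp add: fps_compose_power[OF g0])
  also have "\<dots> = (1 + sinh_fps^2) oo arcsinh_fps" by (simp add: cosh_sq)
  also have "\<dots> = 1 + fps_X^2"
    by (simp add: fps_compose_add_distrib fps_compose_power[OF g0, symmetric] sinh_g)
  finally show ?thesis .
qed

lemma q_rel: "(fps_deriv arcsinh_fps)^2 * (1 + fps_X^2) = 1"
proof -
  have "(fps_deriv arcsinh_fps)^2 * (1 + fps_X^2) = ((cosh_fps oo arcsinh_fps) * fps_deriv arcsinh_fps)^2"
    by (simp add: c_sq power_mult_distrib)
  then show ?thesis by (simp add: cq)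
qed

lemma q_deriv: "fps_deriv (fps_deriv arcsinh_fps) = - fps_X * (fps_deriv arcsinh_fps)^3"
proof -
  define c where "c = cosh_fps oo arcsinh_fps"
  define q where "q = fps_deriv arcsinh_fps"
  have dc: "fps_deriv c = fps_X * q"
    using fps_compose_deriv[OF g0, of cosh_fps] by (simp add: c_def q_def deriv_cosh sinh_g)
  have 1: "c * q = 1" using cq by (simp add: c_def q_def)
  have "fps_deriv (c * q) = 0" by (simp add: 1)
  then have "fps_X * q * q + c * fps_deriv q = 0" by (simp add: dc algebra_simps)
  then have "q * (fps_X * q * q + c * fps_deriv q) = 0" by simp
  then have "fps_X * q^3 + (c * q) * fps_deriv q = 0"
    by (simp add: algebra_simps power3_eq_cube)
  then have "fps_X * q^3 + fps_deriv q = 0" by (simp only: 1 mult_1_left)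
  then have "fps_deriv q = - fps_X * q^3" by (simp add: eq_neg_iff_add_eq_0 add.commute)
  then show ?thesis by (simp add: q_def)
qed

lemma fg: "cauchy2_egf * arcsinh_fps = fps_X"
  unfolding cauchy2_egf_def
  by (rule fps_times_divide_eq[OF g_ne0]) (use subdegree_leI[of arcsinh_fps 1] g1 in simp)

lemma final_alg:
  fixes X g q f f1 f2 f3 f4 :: "'a::idom"
  assumes rel: "q^2 * (1 + X^2) = 1"
    and h0: "f * g = X" and h1: "f1 * g^2 = g - X * q"
    and h2: "f2 * g^3 = X^2 * g * q^3 + 2 * X * q^2 - 2 * g * q"
    and h3: "f3 * g^4 = - 3 * X^3 * g^2 * q^5 - 6 * X^2 * g * q^4 + 4 * X * g^2 * q^3 - 6 * X * q^3 + 6 * g * q^2"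
    and h4: "f4 * g^5 = 15 * X^4 * g^3 * q^7 + 30 * X^3 * g^2 * q^6 - 21 * X^2 * g^3 * q^5 + 36 * X^2 * g * q^5 - 32 * X * g^2 * q^4 + 24 * X * q^4 + 4 * g^3 * q^3 - 24 * g * q^3"
  shows "g^5 * (24 * f^5) = g^5 * ((24 + 20 * X^2 + X^4) * f + (- 24 - 20 * X^2 - X^4) * X * f1 + (12 + 10 * X^2 + X^4) * X^2 * f2 + (- 4 - 2 * X^2 + 2 * X^4) * X^3 * f3 + (1 + 2 * X^2 + X^4) * X^4 * f4)"
proof -
  have "g^5 * (24 * f^5) = 24 * (f*g)^5" by (simp add: algebra_simps)
  also have "\<dots> = 24 * X^5" by (simp add: h0)
  finally have L: "g^5 * (24 * f^5) = 24 * X^5" .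
  have "g^5 * ((24 + 20 * X^2 + X^4) * f + (- 24 - 20 * X^2 - X^4) * X * f1 + (12 + 10 * X^2 + X^4) * X^2 * f2 + (- 4 - 2 * X^2 + 2 * X^4) * X^3 * f3 + (1 + 2 * X^2 + X^4) * X^4 * f4) =
     (24 + 20 * X^2 + X^4) * g^4 * (f*g) + (- 24 - 20 * X^2 - X^4) * X * g^3 * (f1*g^2) + (12 + 10 * X^2 + X^4) * X^2 * g^2 * (f2*g^3)
     + (- 4 - 2 * X^2 + 2 * X^4) * X^3 * g * (f3*g^4) + (1 + 2 * X^2 + X^4) * X^4 * (f4*g^5)"
    by algebra
  also have "\<dots> = (24 + 20 * X^2 + X^4) * g^4 * X + (- 24 - 20 * X^2 - X^4) * X * g^3 * (g - X * q) + (12 + 10 * X^2 + X^4) * X^2 * g^2 * (X^2 * g * q^3 + 2 * X * q^2 - 2 * g * q)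
     + (- 4 - 2 * X^2 + 2 * X^4) * X^3 * g * (- 3 * X^3 * g^2 * q^5 - 6 * X^2 * g * q^4 + 4 * X * g^2 * q^3 - 6 * X * q^3 + 6 * g * q^2) + (1 + 2 * X^2 + X^4) * X^4 * (15 * X^4 * g^3 * q^7 + 30 * X^3 * g^2 * q^6 - 21 * X^2 * g^3 * q^5 + 36 * X^2 * g * q^5 - 32 * X * g^2 * q^4 + 24 * X * q^4 + 4 * g^3 * q^3 - 24 * g * q^3)"
    by (simp only: h0 h1 h2 h3 h4)
  also have "\<dots> = 24 * X^5 + (q^2 * (1 + X^2) - 1) * (15 * X^10 * g^3 * q^5 + 30 * X^9 * g^2 * q^4 + 15 * X^8 * g^3 * q^5 - 12 * X^8 * g^3 * q^3 + 36 * X^8 * g * q^3 + 30 * X^7 * g^2 * q^4 - 14 * X^7 * g^2 * q^2 + 24 * X^7 * q^2 - 9 * X^6 * g^3 * q^3 + X^6 * g^3 * q + 36 * X^6 * g * q^3 - 8 * X^5 * g^2 * q^2 + 24 * X^5 * q^2 + 24 * X^5)"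
    by algebra
  also have "\<dots> = 24 * X^5" by (simp add: rel)
  finally show ?thesis using L by simp
qed

lemma step_fps:
  fixes a g r :: "real fps"
  assumes "a * g^n = r" and "m = Suc n"
  shows "fps_deriv a * g^m = g * fps_deriv r - of_nat n * fps_deriv g * r"
proof (cases n)
  case 0
  then show ?thesis using assms by (simp add: mult.commute)
next
  case (Suc k)
  have "fps_deriv (a * g^n) = fps_deriv r" using assms by simp
  hence "a * (of_nat n * fps_deriv g * g^k) + fps_deriv a * g^n = fps_deriv r"
    by (simp only: fps_deriv_mult fps_deriv_power' Suc diff_Suc_1)
  hence "g * fps_deriv r = g * (a * (of_nat n * fps_deriv g * g^k) + fps_deriv a * g^n)" by simp
  also have "\<dots> = of_nat n * fps_deriv g * (a * g^n) + fps_deriv a * g^Suc n"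
    unfolding Suc by (simp add: algebra_simps)
  finally show ?thesis using assms by simp
qed

lemma main_fps:
  defines "f \<equiv> cauchy2_egf"
  shows "24 * f^5 = (24 + 20 * fps_X^2 + fps_X^4) * f
     + (- 24 - 20 * fps_X^2 - fps_X^4) * fps_X * fps_deriv f
     + (12 + 10 * fps_X^2 + fps_X^4) * fps_X^2 * fps_deriv (fps_deriv f)
     + (- 4 - 2 * fps_X^2 + 2 * fps_X^4) * fps_X^3 * fps_deriv (fps_deriv (fps_deriv f))
     + (1 + 2 * fps_X^2 + fps_X^4) * fps_X^4 * fps_deriv (fps_deriv (fps_deriv (fps_deriv f)))"
proof -
  define g where "g = arcsinh_fps"
  define q where "q = fps_deriv arcsinh_fps"
  define X :: "real fps" where "X = fps_X"
  have Dg: "fps_deriv g = q" by (simp add: g_def q_def)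
  have Dq: "fps_deriv q = - X * q^3" by (simp add: q_def X_def q_deriv)
  have DX: "fps_deriv X = 1" by (simp add: X_def)
  have rel: "q^2 * (1 + X^2) = 1" using q_rel by (simp add: q_def X_def)
  have h0: "f * g^1 = X" using fg by (simp add: f_def g_def X_def)
  have e1: "g * fps_deriv X - of_nat 1 * fps_deriv g * X = g - X * q"
    by (simp add: Dg DX)
  have h1: "fps_deriv f * g^2 = g - X * q"
    by (rule trans[OF step_fps[OF h0] e1]) simp
  have e2: "g * fps_deriv (g - X * q) - of_nat 2 * fps_deriv g * (g - X * q)
     = X^2 * g * q^3 + 2 * X * q^2 - 2 * g * q"
    apply (simp add: Dg DX Dq)
    by algebra
  have h2: "fps_deriv (fps_deriv f) * g^3 = X^2 * g * q^3 + 2 * X * q^2 - 2 * g * q"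
    by (rule trans[OF step_fps[OF h1] e2]) simp
  have e3: "g * fps_deriv (X^2 * g * q^3 + 2 * X * q^2 - 2 * g * q) - of_nat 3 * fps_deriv g * (X^2 * g * q^3 + 2 * X * q^2 - 2 * g * q)
     = - 3 * X^3 * g^2 * q^5 - 6 * X^2 * g * q^4 + 4 * X * g^2 * q^3 - 6 * X * q^3 + 6 * g * q^2"
    apply (simp add: Dg DX Dq fps_deriv_power')
    by algebra
  have h3: "fps_deriv (fps_deriv (fps_deriv f)) * g^4 = - 3 * X^3 * g^2 * q^5 - 6 * X^2 * g * q^4 + 4 * X * g^2 * q^3 - 6 * X * q^3 + 6 * g * q^2"
    by (rule trans[OF step_fps[OF h2] e3]) simp
  have e4: "g * fps_deriv (- 3 * X^3 * g^2 * q^5 - 6 * X^2 * g * q^4 + 4 * X * g^2 * q^3 - 6 * X * q^3 + 6 * g * q^2) - of_nat 4 * fps_deriv g * (- 3 * X^3 * g^2 * q^5 - 6 * X^2 * g * q^4 + 4 * X * g^2 * q^3 - 6 * X * q^3 + 6 * g * q^2)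
     = 15 * X^4 * g^3 * q^7 + 30 * X^3 * g^2 * q^6 - 21 * X^2 * g^3 * q^5 + 36 * X^2 * g * q^5 - 32 * X * g^2 * q^4 + 24 * X * q^4 + 4 * g^3 * q^3 - 24 * g * q^3"
    apply (simp add: Dg DX Dq fps_deriv_power')
    by algebra
  have h4: "fps_deriv (fps_deriv (fps_deriv (fps_deriv f))) * g^5 = 15 * X^4 * g^3 * q^7 + 30 * X^3 * g^2 * q^6 - 21 * X^2 * g^3 * q^5 + 36 * X^2 * g * q^5 - 32 * X * g^2 * q^4 + 24 * X * q^4 + 4 * g^3 * q^3 - 24 * g * q^3"
    by (rule trans[OF step_fps[OF h3] e4]) simp
  have "g^5 * (24 * f^5) = g^5 * ((24 + 20 * X^2 + X^4) * f
     + (- 24 - 20 * X^2 - X^4) * X * fps_deriv f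
     + (12 + 10 * X^2 + X^4) * X^2 * fps_deriv (fps_deriv f)
     + (- 4 - 2 * X^2 + 2 * X^4) * X^3 * fps_deriv (fps_deriv (fps_deriv f))
     + (1 + 2 * X^2 + X^4) * X^4 * fps_deriv (fps_deriv (fps_deriv (fps_deriv f))))"
    by (rule final_alg[OF rel _ h1 h2 h3 h4]) (use h0 in simp)
  moreover have "g^5 \<noteq> 0" using g_ne0 by (simp add: g_def)
  ultimately show ?thesis by (simp add: X_def)
qed

lemma nth_Dj: "((fps_deriv ^^ j) (h::real fps)) $ k = (\<Prod>r<j. real (k + r + 1)) * h $ (k + j)"
proof (induction j arbitrary: k)
  case 0 then show ?case by simp
next
  case (Suc j)
  have "((fps_deriv ^^ Suc j) h) $ k = real (k + 1) * ((fps_deriv ^^ j) h) $ (k + 1)"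
    by simp
  also have "\<dots> = real (k + 1) * ((\<Prod>r<j. real (k + 1 + r + 1)) * h $ (k + 1 + j))"
    by (simp only: Suc)
  also have "\<dots> = (real (k + 1) * (\<Prod>r<j. real (k + 1 + r + 1))) * h $ (k + Suc j)"
    by simp
  also have "real (k + 1) * (\<Prod>r<j. real (k + 1 + r + 1)) = (\<Prod>r<Suc j. real (k + r + 1))"
    unfolding prod.lessThan_Suc_shift by simp
  finally show ?case .
qed

lemma nth_XD:
  "(fps_X^(i+j) * (fps_deriv ^^ j) (h::real fps)) $ m =
     (if m < i then 0 else (\<Prod>r<j. real (m - i) - real r) * h $ (m - i))"
proof (cases "m < i + j")
  case True
  show ?thesis
  proof (cases "m < i")
    case False
    then have "m - i \<in> {..<j}" using True by auto
    then have "(\<Prod>r<j. real (m - i) - real r) = 0"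
      by (intro prod_zero) (auto intro!: bexI[of _ "m - i"])
    then show ?thesis using True False by (simp add: fps_X_power_mult_nth)
  qed (use True in \<open>simp add: fps_X_power_mult_nth\<close>)
next
  case False
  then have "(fps_X^(i+j) * (fps_deriv ^^ j) h) $ m = (\<Prod>r<j. real (m - (i + j) + r + 1)) * h $ (m - i)"
    by (simp add: fps_X_power_mult_nth nth_Dj)
  also have "(\<Prod>r<j. real (m - (i + j) + r + 1)) = (\<Prod>r<j. real (m - (i + j) + (j - Suc r) + 1))"
    by (rule prod.nat_diff_reindex[symmetric])
  also have "\<dots> = (\<Prod>r<j. real (m - i) - real r)"
    by (rule prod.cong) (use False in auto)
  finally show ?thesis using False by simp
qed

lemma nth_num: "(numeral k * (h::real fps)) $ m = numeral k * h $ m"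
  by (simp add: numeral_fps_const)

lemma main_coeff:
  fixes m :: nat
  defines "f \<equiv> cauchy2_egf"
  defines "P \<equiv> \<lambda>i j. (if m < i then 0 else (\<Prod>r<j. real (m - i) - real r) * f $ (m - i))"
  shows "24 * (f^5) $ m = 24 * P 0 0 + 20 * P 2 0 + P 4 0
     - 24 * P 0 1 - 20 * P 2 1 - P 4 1
     + 12 * P 0 2 + 10 * P 2 2 + P 4 2
     - 4 * P 0 3 - 2 * P 2 3 + 2 * P 4 3
     + P 0 4 + 2 * P 2 4 + P 4 4"
proof -
  define T where "T = (\<lambda>i j. fps_X^(i+j) * (fps_deriv ^^ j) f)"
  have TP: "T i j $ m = P i j" for i j
    unfolding T_def P_def by (rule nth_XD)
  have "24 * f^5 = 24 * T 0 0 + 20 * T 2 0 + T 4 0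
     - 24 * T 0 1 - 20 * T 2 1 - T 4 1
     + 12 * T 0 2 + 10 * T 2 2 + T 4 2
     - 4 * T 0 3 - 2 * T 2 3 + 2 * T 4 3
     + T 0 4 + 2 * T 2 4 + T 4 4"
    unfolding T_def f_def
    apply (simp add: main_fps numeral_2_eq_2 numeral_3_eq_3 eval_nat_numeral(2))
    by algebra
  then have "(24 * f^5) $ m = (24 * T 0 0 + 20 * T 2 0 + T 4 0
     - 24 * T 0 1 - 20 * T 2 1 - T 4 1
     + 12 * T 0 2 + 10 * T 2 2 + T 4 2
     - 4 * T 0 3 - 2 * T 2 3 + 2 * T 4 3
     + T 0 4 + 2 * T 2 4 + T 4 4) $ m" by simp
  then show ?thesis by (simp only: fps_add_nth fps_sub_nth nth_num TP)
qed

lemma negX0: "(- fps_X :: real fps) $ 0 = 0" by simp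

lemma sinh_odd: "sinh_fps oo (- fps_X) = - sinh_fps"
proof -
  have "(-1::real)^n * sinh_fps $ n = - sinh_fps $ n" for n
    by (cases "even n") (auto simp: sinh_nth)
  then show ?thesis
    by (simp add: fps_compose_uminus' fps_eq_iff)
qed

lemma negX_compose: "(h::real fps) $ 0 = 0 \<Longrightarrow> (- fps_X) oo h = - h"
  by (simp add: fps_compose_uminus)

lemma g_odd: "arcsinh_fps oo (- fps_X) = - arcsinh_fps"
proof -
  define gm where "gm = - (arcsinh_fps oo (- fps_X))"
  have gm0: "gm $ 0 = 0" by (simp add: gm_def g0)
  have c0: "(arcsinh_fps oo (- fps_X)) $ 0 = 0" by (simp add: g0)
  have "sinh_fps oo gm = sinh_fps oo ((- fps_X) oo (arcsinh_fps oo (- fps_X)))"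
    by (simp add: gm_def negX_compose[OF c0])
  also have "\<dots> = (sinh_fps oo (- fps_X)) oo (arcsinh_fps oo (- fps_X))"
    by (rule fps_compose_assoc[OF c0 negX0])
  also have "\<dots> = - (sinh_fps oo (arcsinh_fps oo (- fps_X)))"
    by (simp add: sinh_odd fps_compose_uminus)
  also have "sinh_fps oo (arcsinh_fps oo (- fps_X)) = (sinh_fps oo arcsinh_fps) oo (- fps_X)"
    by (rule fps_compose_assoc[OF negX0 g0])
  also have "\<dots> = - fps_X" by (simp add: sinh_g)
  finally have sg: "sinh_fps oo gm = fps_X" by simp
  have inv: "arcsinh_fps oo sinh_fps = fps_X"
    unfolding arcsinh_fps_def by (rule fps_inv[OF sinh0]) (simp add: sinh1')
  have "gm = (arcsinh_fps oo sinh_fps) oo gm"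
    by (simp add: inv gm0)
  also have "\<dots> = arcsinh_fps oo (sinh_fps oo gm)"
    by (rule fps_compose_assoc[OF gm0 sinh0, symmetric])
  also have "\<dots> = arcsinh_fps" by (simp add: sg)
  finally have "gm = arcsinh_fps" .
  then show ?thesis unfolding gm_def by (metis minus_minus)
qed

lemma f_even_compose: "cauchy2_egf oo (- fps_X) = cauchy2_egf"
proof -
  have "(cauchy2_egf oo (- fps_X)) * (arcsinh_fps oo (- fps_X)) = (cauchy2_egf * arcsinh_fps) oo (- fps_X)"
    by (rule fps_compose_mult_distrib[OF negX0, symmetric])
  also have "\<dots> = - fps_X" by (simp add: fg)
  finally have "(cauchy2_egf oo (- fps_X)) * arcsinh_fps = cauchy2_egf * arcsinh_fps"
    by (simp add: g_odd fg)
  then show ?thesis using g_ne0 by simp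
qed

lemma f_odd_zero: "odd m \<Longrightarrow> cauchy2_egf $ m = 0"
proof -
  assume "odd m"
  have "(cauchy2_egf oo (- fps_X)) $ m = cauchy2_egf $ m" by (simp add: f_even_compose)
  then have "(-1)^m * cauchy2_egf $ m = cauchy2_egf $ m" by (simp add: fps_compose_uminus')
  with \<open>odd m\<close> show ?thesis by simp
qed

lemma compose_X2_nth:
  "((H::real fps) oo fps_X^2) $ m = (if even m then H $ (m div 2) else 0)"
proof -
  have "(H oo fps_X^2) $ m = (\<Sum>i=0..m. H $ i * (if m = 2 * i then 1 else 0))"
    by (simp add: fps_compose_nth power_mult[symmetric])
  also have "\<dots> = (\<Sum>i\<in>{0..m}. if i = m div 2 then (if even m then H $ i else 0) else 0)"
    by (rule sum.cong) auto
  also have "\<dots> = (if even m then H $ (m div 2) else 0)"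
    by (simp add: sum.delta)
  finally show ?thesis .
qed

definition Fc :: "real fps" where "Fc = Abs_fps (\<lambda>j. cauchy2_egf $ (2 * j))"

lemma f_eq_Fc: "cauchy2_egf = Fc oo fps_X^2"
  by (auto simp: fps_eq_iff compose_X2_nth Fc_def f_odd_zero)

lemma f5_nth: "(cauchy2_egf ^ 5) $ (2 * n) = (Fc ^ 5) $ n"
proof -
  have "(cauchy2_egf ^ 5) = Fc ^ 5 oo fps_X^2"
    by (subst f_eq_Fc) (simp add: fps_compose_power)
  then show ?thesis by (simp add: compose_X2_nth)
qed

lemma power_nth_PiE:
  fixes H :: "real fps"
  shows "(H ^ Suc k) $ n = (\<Sum>i\<in>{i \<in> {..<Suc k} \<rightarrow>\<^sub>E {..n}. sum i {..<Suc k} = n}. \<Prod>r<Suc k. H $ (i r))"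
proof -
  have "(H ^ Suc k) $ n = (\<Sum>v\<in>natpermute n (k+1). \<Prod>j\<in>{0..k}. H $ (v!j))"
    by (rule fps_power_nth_Suc)
  also have "\<dots> = (\<Sum>i\<in>{i \<in> {..<Suc k} \<rightarrow>\<^sub>E {..n}. sum i {..<Suc k} = n}. \<Prod>r<Suc k. H $ (i r))"
  proof (rule sum.reindex_bij_witness[where i = "\<lambda>a. map a [0..<Suc k]"
        and j = "\<lambda>v. restrict (\<lambda>r. v ! r) {..<Suc k}"])
    fix v assume v: "v \<in> natpermute n (k + 1)"
    then have lv: "length v = Suc k" and sv: "sum_list v = n" by (auto simp: natpermute_def)
    show "map (restrict (\<lambda>r. v ! r) {..<Suc k}) [0..<Suc k] = v"
      by (rule nth_equalityI) (auto simp: lv simp del: upt_Suc)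
  next
    fix v assume v: "v \<in> natpermute n (k + 1)"
    then have lv: "length v = Suc k" and sv: "sum_list v = n" by (auto simp: natpermute_def)
    have "restrict (\<lambda>r. v ! r) {..<Suc k} r \<le> n" if "r < Suc k" for r
      using elem_le_sum_list[of r v] that lv sv by simp
    moreover have "sum (restrict (\<lambda>r. v ! r) {..<Suc k}) {..<Suc k} = n"
      using sv lv by (simp add: sum_list_sum_nth atLeast0LessThan)
    ultimately show "restrict (\<lambda>r. v ! r) {..<Suc k} \<in> {i \<in> {..<Suc k} \<rightarrow>\<^sub>E {..n}. sum i {..<Suc k} = n}"
      by (simp add: PiE_iff)
  next
    fix a assume a: "a \<in> {i \<in> {..<Suc k} \<rightarrow>\<^sub>E {..n}. sum i {..<Suc k} = n}"
    show "restrict (\<lambda>r. map a [0..<Suc k] ! r) {..<Suc k} = a"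
    proof
      fix r show "restrict (\<lambda>r. map a [0..<Suc k] ! r) {..<Suc k} r = a r"
        proof (cases "r < Suc k")
          case True then show ?thesis by (simp del: upt_Suc)
        next
          case False
          have "a \<in> {..<Suc k} \<rightarrow>\<^sub>E {..n}" using a by simp
          then have "a r = undefined" by (rule PiE_arb) (use False in simp)
          then show ?thesis using False by simp
        qed
    qed
  next
    fix a assume a: "a \<in> {i \<in> {..<Suc k} \<rightarrow>\<^sub>E {..n}. sum i {..<Suc k} = n}"
    have "sum_list (map a [0..<Suc k]) = sum a {..<Suc k}"
      by (simp only: sum_set_upt_conv_sum_list_nat[symmetric] atLeast0LessThan set_upt)
    then show "map a [0..<Suc k] \<in> natpermute n (k + 1)"
      using a by (simp add: natpermute_def del: upt_Suc)
  next
    fix v assume v: "v \<in> natpermute n (k + 1)"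
    have "(\<Prod>r<Suc k. H $ (restrict (\<lambda>r. v ! r) {..<Suc k} r)) = (\<Prod>r<Suc k. H $ (v ! r))"
      by (rule prod.cong) auto
    also have "\<dots> = (\<Prod>j\<in>{0..k}. H $ (v!j))"
      by (simp add: atLeast0AtMost lessThan_Suc_atMost)
    finally show "(\<Prod>r<Suc k. H $ (restrict (\<lambda>r. v ! r) {..<Suc k} r)) = (\<Prod>j\<in>{0..k}. H $ (v!j))" .
  qed
  finally show ?thesis .
qed



lemma f_nth_even: "cauchy2_egf $ (2 * j) = cauchy2 j / fact (2 * j)"
  by (simp add: cauchy2_def)

lemma conv_eq: "cauchy2_conv 5 n = fact (2 * n) * (cauchy2_egf ^ 5) $ (2 * n)"
proof -
  have "cauchy2_conv 5 n = (\<Sum>i\<in>{i \<in> {..<(5::nat)} \<rightarrow>\<^sub>E {..n}. sum i {..<5} = n}. fact (2 * n) * (\<Prod>r<5. Fc $ (i r)))"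
    unfolding cauchy2_conv_def
  proof (rule sum.cong[OF refl])
    fix i :: "nat \<Rightarrow> nat"
    have "fact (2 * n) / (\<Prod>r<5. fact (2 * i r)) * (\<Prod>r<5. cauchy2 (i r))
        = fact (2 * n) * ((\<Prod>r<5. cauchy2 (i r)) / (\<Prod>r<5. fact (2 * i r)))"
      by simp
    also have "(\<Prod>r<5. cauchy2 (i r)) / (\<Prod>r<5. fact (2 * i r)) = (\<Prod>r<(5::nat). cauchy2 (i r) / fact (2 * i r))"
      by (rule prod_dividef[symmetric])
    also have "\<dots> = (\<Prod>r<5. Fc $ (i r))"
      by (simp add: Fc_def f_nth_even)
    finally show "fact (2 * n) / (\<Prod>r<5. fact (2 * i r)) * (\<Prod>r<5. cauchy2 (i r)) = fact (2 * n) * (\<Prod>r<5. Fc $ (i r))" .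
  qed
  also have "\<dots> = fact (2 * n) * (Fc ^ 5) $ n"
    using power_nth_PiE[of Fc 4 n] by (simp add: sum_distrib_left numeral_eq_Suc)
  also have "\<dots> = fact (2 * n) * (cauchy2_egf ^ 5) $ (2 * n)"
    by (simp add: f5_nth)
  finally show ?thesis .
qed

lemma choose4_real: "real (N choose 4) = real N * (real N - 1) * (real N - 2) * (real N - 3) / 24"
  by (simp add: binomial_gbinomial gbinomial_altdef_of_nat eval_nat_numeral atLeast0LessThan lessThan_Suc field_simps)

lemma choose2_real: "real (N choose 2) = real N * (real N - 1) / 2"
  by (simp add: binomial_gbinomial gbinomial_altdef_of_nat eval_nat_numeral atLeast0LessThan lessThan_Suc field_simps)

lemma prod0: "(\<Prod>r<(0::nat). (x::real) - real r) = 1" by simp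
lemma prod1: "(\<Prod>r<(1::nat). (x::real) - real r) = x" by simp
lemma prod2: "(\<Prod>r<(2::nat). (x::real) - real r) = x * (x - 1)" by (simp add: eval_nat_numeral lessThan_Suc)
lemma prod3: "(\<Prod>r<(3::nat). (x::real) - real r) = x * (x - 1) * (x - 2)" by (simp add: eval_nat_numeral lessThan_Suc)
lemma prod4: "(\<Prod>r<(4::nat). (x::real) - real r) = x * (x - 1) * (x - 2) * (x - 3)" by (simp add: eval_nat_numeral lessThan_Suc)

theorem mainTheorem8:
  fixes n :: nat
  assumes "n \<ge> 2"
  shows "cauchy2_conv 5 n =
    real ((2 * n - 1) choose 4) * cauchy2 n
    + (4 * real n ^ 2 - 16 * real n + 17) / 3 * real ((2 * n) choose 2)
        * real ((2 * n - 3) choose 2) * cauchy2 (n - 1)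
    + real ((2 * n) choose 4) * (2 * real n - 5) ^ 4 * cauchy2 (n - 2)"
proof -
  obtain k where nk: "n = k + 2" using assms by (metis add.commute le_Suc_ex)
  define m where "m = 2 * n"
  define f where "f = cauchy2_egf"
  define A where "A = cauchy2 (k + 2)"
  define B where "B = cauchy2 (k + 1)"
  define C where "C = cauchy2 k"
  define F0 :: real where "F0 = fact (2 * k)"
  define x :: real where "x = real k"
  have F0pos: "F0 > 0" by (simp add: F0_def)
  have fact4: "fact (2 * n) = (2*x+4)*(2*x+3)*(2*x+2)*(2*x+1) * F0"
    by (simp add: nk F0_def x_def eval_nat_numeral algebra_simps)
  have fact2: "fact (2 * (k + 1)) = (2*x+2)*(2*x+1) * F0"
    by (simp add: F0_def x_def eval_nat_numeral algebra_simps)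
  have An: "A = cauchy2 n" by (simp add: A_def nk)
  have fA: "f $ m = A / fact (2 * n)"
    using f_nth_even[of n] by (simp only: f_def m_def An)
  have fB: "f $ (m - 2) = B / fact (2 * (k + 1))"
  proof -
    have "m - 2 = 2 * (k + 1)" by (simp add: m_def nk)
    then show ?thesis using f_nth_even[of "k+1"] by (simp only: f_def B_def)
  qed
  have fC: "f $ (m - 4) = C / F0"
  proof -
    have "m - 4 = 2 * k" by (simp add: m_def nk)
    then show ?thesis using f_nth_even[of k] by (simp only: f_def C_def F0_def)
  qed
  have m0: "real m = 2*x+4" by (simp add: m_def nk x_def)
  have m2: "real (m - 2) = 2*x+2" by (simp add: m_def nk x_def)
  have m4: "real (m - 4) = 2*x" by (simp add: m_def nk x_def)
  have nm: "\<not> m < 0" "\<not> m < 2" "\<not> m < 4" by (auto simp: m_def nk)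
  have E: "24 * (f^5) $ m =
       24 * (1 * f $ m) + 20 * (1 * f $ (m - 2)) + 1 * f $ (m - 4)
     - 24 * ((2*x+4) * f $ m) - 20 * ((2*x+2) * f $ (m - 2)) - (2*x) * f $ (m - 4)
     + 12 * ((2*x+4) * (2*x+4-1) * f $ m) + 10 * ((2*x+2) * (2*x+2-1) * f $ (m - 2)) + (2*x) * (2*x-1) * f $ (m - 4)
     - 4 * ((2*x+4) * (2*x+4-1) * (2*x+4-2) * f $ m) - 2 * ((2*x+2) * (2*x+2-1) * (2*x+2-2) * f $ (m - 2)) + 2 * ((2*x) * (2*x-1) * (2*x-2) * f $ (m - 4))
     + (2*x+4) * (2*x+4-1) * (2*x+4-2) * (2*x+4-3) * f $ m + 2 * ((2*x+2) * (2*x+2-1) * (2*x+2-2) * (2*x+2-3) * f $ (m - 2)) + (2*x) * (2*x-1) * (2*x-2) * (2*x-3) * f $ (m - 4)"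
    using main_coeff[of m]
    by (simp only: f_def[symmetric] nm if_False m0 m2 m4 prod0 prod1 prod2 prod3 prod4 diff_zero)
  have conv: "cauchy2_conv 5 n = fact (2 * n) * (f^5) $ m"
    by (simp add: conv_eq f_def m_def)
  have b1: "real ((2 * n - 1) choose 4) = (2*x+3) * (2*x+2) * (2*x+1) * (2*x) / 24"
  proof -
    have "2 * n - 1 = 2 * k + 3" by (simp add: nk)
    then show ?thesis by (simp add: choose4_real x_def algebra_simps)
  qed
  have b2: "real ((2 * n) choose 2) = (2*x+4) * (2*x+3) / 2"
    by (simp add: choose2_real nk x_def algebra_simps)
  have b3: "real ((2 * n - 3) choose 2) = (2*x+1) * (2*x) / 2"
  proof -
    have "2 * n - 3 = 2 * k + 1" by (simp add: nk)
    then show ?thesis by (simp add: choose2_real x_def algebra_simps)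
  qed
  have b4: "real ((2 * n) choose 4) = (2*x+4) * (2*x+3) * (2*x+2) * (2*x+1) / 24"
    by (simp add: choose4_real nk x_def algebra_simps)
  have rn: "real n = x + 2" by (simp add: nk x_def)
  have cn: "cauchy2 n = A" "cauchy2 (n - 1) = B" "cauchy2 (n - 2) = C"
    by (simp_all add: A_def B_def C_def nk)
  have fnz: "fact (2 * n) \<noteq> (0::real)" "fact (2 * (k + 1)) \<noteq> (0::real)" "F0 \<noteq> 0"
    using F0pos by auto
  have fA': "A = (2*x+4)*(2*x+3)*(2*x+2)*(2*x+1) * F0 * f $ m"
    using fA fnz fact4 by (simp add: field_simps)
  have fB': "B = (2*x+2)*(2*x+1) * F0 * f $ (m - 2)"
    using fB fnz fact2 by (simp add: field_simps)
  have fC': "C = F0 * f $ (m - 4)"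
    using fC fnz by (simp add: field_simps)
  define y where "y = (f^5) $ m"
  define a where "a = f $ m"
  define b where "b = f $ (m - 2)"
  define c where "c = f $ (m - 4)"
  have E': "24 * y =
       24 * (1 * a) + 20 * (1 * b) + 1 * c
     - 24 * ((2*x+4) * a) - 20 * ((2*x+2) * b) - (2*x) * c
     + 12 * ((2*x+4) * (2*x+4-1) * a) + 10 * ((2*x+2) * (2*x+2-1) * b) + (2*x) * (2*x-1) * c
     - 4 * ((2*x+4) * (2*x+4-1) * (2*x+4-2) * a) - 2 * ((2*x+2) * (2*x+2-1) * (2*x+2-2) * b) + 2 * ((2*x) * (2*x-1) * (2*x-2) * c)
     + (2*x+4) * (2*x+4-1) * (2*x+4-2) * (2*x+4-3) * a + 2 * ((2*x+2) * (2*x+2-1) * (2*x+2-2) * (2*x+2-3) * b) + (2*x) * (2*x-1) * (2*x-2) * (2*x-3) * c"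
    using E by (simp only: y_def a_def b_def c_def)
  have G: "cauchy2_conv 5 n = (2*x+4)*(2*x+3)*(2*x+2)*(2*x+1) * F0 * y"
    by (simp only: conv fact4 y_def)
  show ?thesis
    unfolding G b1 b2 b3 b4 rn cn fA' fB' fC' a_def[symmetric] b_def[symmetric] c_def[symmetric]
    using E' by algebra
qed

end
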